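(* Let $n\ge1$, $\boldsymbol\alpha=(\alpha_1,\dots,\alpha_n)\in((0,\pi)\setminus\mathcal E)^n$, $\boldsymbol\ell=(\ell_1,\dots,\ell_n)\in(0,\infty)^n$, $\sigma\in\mathbb R$. Then the matrix $\mathtt T(\boldsymbol\alpha,\boldsymbol\ell,\sigma)$ has the form $\begin{pmatrix}p_n&q_n\\ \bar q_n&\bar p_n\end{pmatrix}$ with $|p_n|^2-|q_n|^2=1$, where $$p_n=\frac{1}{\prod_{j=1}^n\sin\frac{\pi^2}{2\alpha_j}}\sum_{\substack{\boldsymbol\zeta\in\{\pm1\}^n\\ \zeta_1=1}}\mathfrak p_{\boldsymbol\zeta}\,e^{i\,\boldsymbol\ell\cdot\boldsymbol\zeta\,\sigma},\qquad q_n=\frac{-i}{\prod_{j=1}^n\sin\frac{\pi^2}{2\alpha_j}}\sum_{\substack{\boldsymbol\zeta\in\{\pm1\}^n\\ \zeta_1=1}}\mathfrak q_{\boldsymbol\zeta}\,e^{-i\,\boldsymbol\ell\cdot\boldsymbol\zeta\,\sigma}.$$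
   Context: $\mathcal E=\{\pi/(2k):k\in\mathbb N\}$. For $\alpha\notin\mathcal E$, $\mathtt A(\alpha)=\begin{pmatrix}\csc\frac{\pi^2}{2\alpha}&-i\cot\frac{\pi^2}{2\alpha}\\ i\cot\frac{\pi^2}{2\alpha}&\csc\frac{\pi^2}{2\alpha}\end{pmatrix}$, $\mathtt B(\ell,\sigma)=\operatorname{diag}(e^{i\ell\sigma},e^{-i\ell\sigma})$, and $\mathtt T(\boldsymbol\alpha,\boldsymbol\ell,\sigma)=\mathtt A(\alpha_n)\mathtt B(\ell_n,\sigma)\cdots\mathtt A(\alpha_1)\mathtt B(\ell_1,\sigma)$. For $\boldsymbol\zeta\in\{\pm1\}^n$: $\mathrm{ch}(\boldsymbol\zeta)=\{j\in\{1,\dots,n\}:\zeta_j\ne\zeta_{j+1}\}$ with cyclic convention $\zeta_{n+1}=\zeta_1$; $\widetilde{\mathrm{ch}}(\boldsymbol\zeta)=\{j\in\{1,\dots,n\}:\zeta_j\ne\zeta_{j+1}\}$ with the convention $\zeta_{n+1}=-1$ instead; $\mathfrak p_{\boldsymbol\zeta}=\prod_{j\in\mathrm{ch}(\boldsymbol\zeta)}\cos\frac{\pi^2}{2\alpha_j}$, $\mathfrak q_{\boldsymbol\zeta}=\prod_{j\in\widetilde{\mathrm{ch}}(\boldsymbol\zeta)}\cos\frac{\pi^2}{2\alpha_j}$ (empty products equal $1$); $\boldsymbol\ell\cdot\boldsymbol\zeta=\sum_j\ell_j\zeta_j$. *)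

theory Defs
  imports "HOL-Analysis.Analysis"
begin

definition excl_set :: "real set" where
  "excl_set = {pi / (2 * real k) | k::nat. k \<ge> 1}"

definition mat2 :: "complex \<Rightarrow> complex \<Rightarrow> complex \<Rightarrow> complex \<Rightarrow> complex^2^2" where
  "mat2 a b c d = (\<chi> i j. if i = 1 then (if j = 1 then a else b) else (if j = 1 then c else d))"

definition Amat :: "real \<Rightarrow> complex^2^2" where
  "Amat a = mat2 (complex_of_real (1 / sin (pi\<^sup>2 / (2*a)))) (- \<i> * complex_of_real (cot (pi\<^sup>2 / (2*a))))
                 (\<i> * complex_of_real (cot (pi\<^sup>2 / (2*a)))) (complex_of_real (1 / sin (pi\<^sup>2 / (2*a))))"

definition Bmat :: "real \<Rightarrow> real \<Rightarrow> complex^2^2" where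
  "Bmat ell sg = mat2 (cis (ell * sg)) 0 0 (cis (- (ell * sg)))"

fun Tmat :: "(nat \<Rightarrow> real) \<Rightarrow> (nat \<Rightarrow> real) \<Rightarrow> real \<Rightarrow> nat \<Rightarrow> complex^2^2" where
  "Tmat a l s 0 = mat 1"
| "Tmat a l s (Suc k) = (Amat (a (Suc k)) ** Bmat (l (Suc k)) s) ** Tmat a l s k"

definition signs1 :: "nat \<Rightarrow> (nat \<Rightarrow> real) set" where
  "signs1 n = {z. (\<forall>j\<in>{1..n}. z j = 1 \<or> z j = -1) \<and> (\<forall>j. j \<notin> {1..n} \<longrightarrow> z j = 0) \<and> z 1 = 1}"

definition ch :: "nat \<Rightarrow> (nat \<Rightarrow> real) \<Rightarrow> nat set" where
  "ch n z = {j\<in>{1..n}. z j \<noteq> (if j = n then z 1 else z (j+1))}"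

definition cht :: "nat \<Rightarrow> (nat \<Rightarrow> real) \<Rightarrow> nat set" where
  "cht n z = {j\<in>{1..n}. z j \<noteq> (if j = n then -1 else z (j+1))}"

definition pfrak :: "nat \<Rightarrow> (nat \<Rightarrow> real) \<Rightarrow> (nat \<Rightarrow> real) \<Rightarrow> real" where
  "pfrak n a z = (\<Prod>j\<in>ch n z. cos (pi\<^sup>2 / (2 * a j)))"

definition qfrak :: "nat \<Rightarrow> (nat \<Rightarrow> real) \<Rightarrow> (nat \<Rightarrow> real) \<Rightarrow> real" where
  "qfrak n a z = (\<Prod>j\<in>cht n z. cos (pi\<^sup>2 / (2 * a j)))"

definition ldot :: "nat \<Rightarrow> (nat \<Rightarrow> real) \<Rightarrow> (nat \<Rightarrow> real) \<Rightarrow> real" where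
  "ldot n l z = (\<Sum>j=1..n. l j * z j)"

end

theory Submission
  imports Defs
begin

lemma mat2_mult: "mat2 a b c d ** mat2 e f g h = mat2 (a*e+b*g) (a*f+b*h) (c*e+d*g) (c*f+d*h)"
  unfolding mat2_def matrix_matrix_mult_def
  by (simp add: vec_eq_iff forall_2 sum_2)

lemma mat1_mat2: "(mat 1 :: complex^2^2) = mat2 1 0 0 1"
  unfolding mat2_def mat_def by (simp add: vec_eq_iff forall_2)

lemma mat2_eq: "mat2 a b c d = mat2 a' b' c' d' \<longleftrightarrow> a = a' \<and> b = b' \<and> c = c' \<and> d = d'"
  unfolding mat2_def by (auto simp: vec_eq_iff forall_2)

lemma step_mat:
  "Amat x ** Bmat y s ** mat2 p q (cnj q) (cnj p) =
   mat2 (of_real (1/sin (pi\<^sup>2/(2*x))) * cis (y * s) * p - \<i> * of_real (cot (pi\<^sup>2/(2*x))) * cis (-(y * s)) * cnj q)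
        (of_real (1/sin (pi\<^sup>2/(2*x))) * cis (y * s) * q - \<i> * of_real (cot (pi\<^sup>2/(2*x))) * cis (-(y * s)) * cnj p)
        (cnj (of_real (1/sin (pi\<^sup>2/(2*x))) * cis (y * s) * q - \<i> * of_real (cot (pi\<^sup>2/(2*x))) * cis (-(y * s)) * cnj p))
        (cnj (of_real (1/sin (pi\<^sup>2/(2*x))) * cis (y * s) * p - \<i> * of_real (cot (pi\<^sup>2/(2*x))) * cis (-(y * s)) * cnj q))"
  unfolding Amat_def Bmat_def mat2_mult mat2_eq
  by (simp add: cis_cnj algebra_simps)


lemma signs1_out: "z \<in> signs1 n \<Longrightarrow> z (Suc n) = 0"
  unfolding signs1_def by auto

lemma upd_in:
  assumes "n \<ge> 1" "z \<in> signs1 n" "b = 1 \<or> b = -1"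
  shows "z(Suc n := b) \<in> signs1 (Suc n)"
proof -
  have z1: "\<forall>j\<in>{1..n}. z j = 1 \<or> z j = -1" and z2: "\<forall>j. j \<notin> {1..n} \<longrightarrow> z j = 0" and z3: "z 1 = 1"
    using assms(2) unfolding signs1_def by auto
  have "\<forall>j\<in>{1..Suc n}. (z(Suc n := b)) j = 1 \<or> (z(Suc n := b)) j = -1"
  proof
    fix j assume j: "j \<in> {1..Suc n}"
    show "(z(Suc n := b)) j = 1 \<or> (z(Suc n := b)) j = -1"
    proof (cases "j = Suc n")
      case True thus ?thesis using assms(3) by simp
    next
      case False
      hence "j \<in> {1..n}" using j by auto
      thus ?thesis using z1 False by simp
    qed
  qed
  moreover have "\<forall>j. j \<notin> {1..Suc n} \<longrightarrow> (z(Suc n := b)) j = 0"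
    using z2 by auto
  moreover have "(z(Suc n := b)) 1 = 1" using z3 assms(1) by simp
  ultimately show ?thesis unfolding signs1_def by blast
qed

lemma restr_in:
  assumes "n \<ge> 1" "z \<in> signs1 (Suc n)"
  shows "z(Suc n := 0) \<in> signs1 n" "z (Suc n) = 1 \<or> z (Suc n) = -1"
proof -
  have z1: "\<forall>j\<in>{1..Suc n}. z j = 1 \<or> z j = -1" and z2: "\<forall>j. j \<notin> {1..Suc n} \<longrightarrow> z j = 0" and z3: "z 1 = 1"
    using assms(2) unfolding signs1_def by auto
  show "z (Suc n) = 1 \<or> z (Suc n) = -1" using z1 by simp
  have "\<forall>j\<in>{1..n}. (z(Suc n := 0)) j = 1 \<or> (z(Suc n := 0)) j = -1"
    using z1 by auto
  moreover have "\<forall>j. j \<notin> {1..n} \<longrightarrow> (z(Suc n := 0)) j = 0"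
  proof (intro allI impI)
    fix j assume "j \<notin> {1..n}"
    thus "(z(Suc n := 0)) j = 0" using z2 by (cases "j = Suc n") auto
  qed
  moreover have "(z(Suc n := 0)) 1 = 1" using z3 assms(1) by simp
  ultimately show "z(Suc n := 0) \<in> signs1 n" unfolding signs1_def by blast
qed

lemma signs1_Suc:
  assumes "n \<ge> 1"
  shows "signs1 (Suc n) = (\<lambda>z. z(Suc n := 1)) ` signs1 n \<union> (\<lambda>z. z(Suc n := -1)) ` signs1 n"
proof
  show "(\<lambda>z. z(Suc n := 1)) ` signs1 n \<union> (\<lambda>z. z(Suc n := -1)) ` signs1 n \<subseteq> signs1 (Suc n)"
    using upd_in[OF assms] by blast
next
  show "signs1 (Suc n) \<subseteq> (\<lambda>z. z(Suc n := 1)) ` signs1 n \<union> (\<lambda>z. z(Suc n := -1)) ` signs1 n"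
  proof
    fix z assume z: "z \<in> signs1 (Suc n)"
    have w: "z(Suc n := 0) \<in> signs1 n" using restr_in[OF assms z] by blast
    have "z (Suc n) = 1 \<or> z (Suc n) = -1" using restr_in[OF assms z] by blast
    moreover have "z = (z(Suc n := 0))(Suc n := z (Suc n))" by simp
    ultimately show "z \<in> (\<lambda>z. z(Suc n := 1)) ` signs1 n \<union> (\<lambda>z. z(Suc n := -1)) ` signs1 n"
      using w by (metis UnI1 UnI2 image_eqI)
  qed
qed

lemma signs1_1: "signs1 1 = {\<lambda>j. if j = 1 then 1 else 0}"
proof -
  have "z \<in> signs1 1 \<longleftrightarrow> z = (\<lambda>j. if j = 1 then 1 else 0)" for z
    unfolding signs1_def by (auto simp: fun_eq_iff)
  thus ?thesis by blast
qed


lemma finite_signs1: "n \<ge> 1 \<Longrightarrow> finite (signs1 n)"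
proof (induction n rule: dec_induct)
  case base thus ?case using signs1_1 by (metis finite.emptyI finite_insert)
next
  case (step m) thus ?case using signs1_Suc[of m] by simp
qed

lemma sum_signs1_Suc:
  assumes "n \<ge> 1"
  shows "(\<Sum>z\<in>signs1 (Suc n). f z) = (\<Sum>z\<in>signs1 n. f (z(Suc n := 1))) + (\<Sum>z\<in>signs1 n. f (z(Suc n := -1)))"
proof -
  have inj: "inj_on (\<lambda>z. z(Suc n := b)) (signs1 n)" for b :: real
  proof (rule inj_onI)
    fix x y assume "x \<in> signs1 n" "y \<in> signs1 n" "x(Suc n := b) = y(Suc n := b)"
    thus "x = y" using signs1_out[of x n] signs1_out[of y n] by (metis fun_upd_triv fun_upd_upd)
  qed
  have disj: "(\<lambda>z. z(Suc n := 1)) ` signs1 n \<inter> (\<lambda>z. z(Suc n := -1)) ` signs1 n = {}"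
  proof -
    have "x(Suc n := (1::real)) \<noteq> y(Suc n := -1)" for x y
      by (metis fun_upd_same one_neq_neg_one)
    thus ?thesis by blast
  qed
  have fin: "finite (signs1 n)" using finite_signs1[OF assms] .
  have "(\<Sum>z\<in>signs1 (Suc n). f z) = sum f ((\<lambda>z. z(Suc n := 1)) ` signs1 n) + sum f ((\<lambda>z. z(Suc n := -1)) ` signs1 n)"
    unfolding signs1_Suc[OF assms] using fin disj by (simp add: sum.union_disjoint)
  also have "\<dots> = (\<Sum>z\<in>signs1 n. f (z(Suc n := 1))) + (\<Sum>z\<in>signs1 n. f (z(Suc n := -1)))"
    by (simp add: sum.reindex[OF inj])
  finally show ?thesis .
qed

lemma ldot_Suc: "ldot (Suc n) l (z(Suc n := b)) = ldot n l z + l (Suc n) * b"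
proof -
  have "ldot (Suc n) l (z(Suc n := b)) = (\<Sum>j=1..n. l j * (z(Suc n := b)) j) + l (Suc n) * b"
    unfolding ldot_def by (simp add: sum.cl_ivl_Suc)
  also have "(\<Sum>j=1..n. l j * (z(Suc n := b)) j) = (\<Sum>j=1..n. l j * z j)"
    by (rule sum.cong) auto
  finally show ?thesis unfolding ldot_def .
qed

lemma mem_ch: "j \<in> ch m w \<longleftrightarrow> 1 \<le> j \<and> j \<le> m \<and> w j \<noteq> (if j = m then w 1 else w (Suc j))"
  unfolding ch_def by simp

lemma mem_cht: "j \<in> cht m w \<longleftrightarrow> 1 \<le> j \<and> j \<le> m \<and> w j \<noteq> (if j = m then -1 else w (Suc j))"
  unfolding cht_def by simp

lemma jcases: obtains "j = Suc n" | "j = n" | "j < n" | "j > Suc n"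
  by linarith

lemma ch_Suc_p:
  assumes "n \<ge> 1" "z \<in> signs1 n"
  shows "ch (Suc n) (z(Suc n := 1)) = ch n z"
proof -
  have z3: "z 1 = 1" using assms(2) unfolding signs1_def by auto
  have "j \<in> ch (Suc n) (z(Suc n := 1)) \<longleftrightarrow> j \<in> ch n z" for j
    by (rule jcases[of j n]) (use assms(1) z3 in \<open>simp_all add: mem_ch\<close>)
  thus ?thesis by blast
qed

lemma ch_Suc_m:
  assumes "n \<ge> 1" "z \<in> signs1 n"
  shows "ch (Suc n) (z(Suc n := -1)) = insert (Suc n) (cht n z)"
proof -
  have z3: "z 1 = 1" using assms(2) unfolding signs1_def by auto
  have "j \<in> ch (Suc n) (z(Suc n := -1)) \<longleftrightarrow> j \<in> insert (Suc n) (cht n z)" for j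
    by (rule jcases[of j n]) (use assms(1) z3 in \<open>simp_all add: mem_ch mem_cht\<close>)
  thus ?thesis by blast
qed

lemma cht_Suc_m:
  assumes "n \<ge> 1" "z \<in> signs1 n"
  shows "cht (Suc n) (z(Suc n := -1)) = cht n z"
proof -
  have "j \<in> cht (Suc n) (z(Suc n := -1)) \<longleftrightarrow> j \<in> cht n z" for j
    by (rule jcases[of j n]) (use assms(1) in \<open>simp_all add: mem_cht\<close>)
  thus ?thesis by blast
qed

lemma cht_Suc_p:
  assumes "n \<ge> 1" "z \<in> signs1 n"
  shows "cht (Suc n) (z(Suc n := 1)) = insert (Suc n) (ch n z)"
proof -
  have z3: "z 1 = 1" using assms(2) unfolding signs1_def by auto
  have "j \<in> cht (Suc n) (z(Suc n := 1)) \<longleftrightarrow> j \<in> insert (Suc n) (ch n z)" for j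
    by (rule jcases[of j n]) (use assms(1) z3 in \<open>simp_all add: mem_ch mem_cht\<close>)
  thus ?thesis by blast
qed


definition PP :: "nat \<Rightarrow> (nat \<Rightarrow> real) \<Rightarrow> (nat \<Rightarrow> real) \<Rightarrow> real \<Rightarrow> complex" where
  "PP n a l s = (\<Sum>z\<in>signs1 n. complex_of_real (pfrak n a z) * cis (ldot n l z * s))"
definition QQ :: "nat \<Rightarrow> (nat \<Rightarrow> real) \<Rightarrow> (nat \<Rightarrow> real) \<Rightarrow> real \<Rightarrow> complex" where
  "QQ n a l s = (\<Sum>z\<in>signs1 n. complex_of_real (qfrak n a z) * cis (- (ldot n l z * s)))"

lemma fin_ch: "finite (ch n z)" "Suc n \<notin> ch n z" "finite (cht n z)" "Suc n \<notin> cht n z"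
  unfolding ch_def cht_def by auto

lemma pfrak_p: "n \<ge> 1 \<Longrightarrow> z \<in> signs1 n \<Longrightarrow> pfrak (Suc n) a (z(Suc n := 1)) = pfrak n a z"
  unfolding pfrak_def by (simp add: ch_Suc_p)
lemma pfrak_m: "n \<ge> 1 \<Longrightarrow> z \<in> signs1 n \<Longrightarrow> pfrak (Suc n) a (z(Suc n := -1)) = cos (pi\<^sup>2 / (2 * a (Suc n))) * qfrak n a z"
  unfolding pfrak_def qfrak_def by (simp add: ch_Suc_m fin_ch)
lemma qfrak_m: "n \<ge> 1 \<Longrightarrow> z \<in> signs1 n \<Longrightarrow> qfrak (Suc n) a (z(Suc n := -1)) = qfrak n a z"
  unfolding qfrak_def by (simp add: cht_Suc_m)
lemma qfrak_p: "n \<ge> 1 \<Longrightarrow> z \<in> signs1 n \<Longrightarrow> qfrak (Suc n) a (z(Suc n := 1)) = cos (pi\<^sup>2 / (2 * a (Suc n))) * pfrak n a z"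
  unfolding pfrak_def qfrak_def by (simp add: cht_Suc_p fin_ch)

lemma cnj_QQ: "cnj (QQ n a l s) = (\<Sum>z\<in>signs1 n. complex_of_real (qfrak n a z) * cis (ldot n l z * s))"
  unfolding QQ_def by (simp add: cis_cnj)
lemma cnj_PP: "cnj (PP n a l s) = (\<Sum>z\<in>signs1 n. complex_of_real (pfrak n a z) * cis (- (ldot n l z * s)))"
  unfolding PP_def by (simp add: cis_cnj)

lemma PP_Suc:
  assumes "n \<ge> 1"
  shows "PP (Suc n) a l s = cis (l (Suc n) * s) * PP n a l s
      + complex_of_real (cos (pi\<^sup>2 / (2 * a (Suc n)))) * cis (- (l (Suc n) * s)) * cnj (QQ n a l s)"
proof -
  let ?c = "cos (pi\<^sup>2 / (2 * a (Suc n)))"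
  have "PP (Suc n) a l s = (\<Sum>z\<in>signs1 n. complex_of_real (pfrak n a z) * cis ((ldot n l z + l (Suc n)) * s))
     + (\<Sum>z\<in>signs1 n. complex_of_real (?c * qfrak n a z) * cis ((ldot n l z - l (Suc n)) * s))"
    unfolding PP_def sum_signs1_Suc[OF assms]
    by (intro arg_cong2[where f="(+)"] sum.cong) (simp_all add: pfrak_p[OF assms] pfrak_m[OF assms] ldot_Suc)
  also have "\<dots> = cis (l (Suc n) * s) * PP n a l s
      + complex_of_real ?c * cis (- (l (Suc n) * s)) * cnj (QQ n a l s)"
    unfolding PP_def cnj_QQ sum_distrib_left
    by (intro arg_cong2[where f="(+)"] sum.cong) (simp_all add: cis_mult algebra_simps)
  finally show ?thesis .
qed

lemma QQ_Suc:
  assumes "n \<ge> 1"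
  shows "QQ (Suc n) a l s = cis (l (Suc n) * s) * QQ n a l s
      + complex_of_real (cos (pi\<^sup>2 / (2 * a (Suc n)))) * cis (- (l (Suc n) * s)) * cnj (PP n a l s)"
proof -
  let ?c = "cos (pi\<^sup>2 / (2 * a (Suc n)))"
  have "QQ (Suc n) a l s = (\<Sum>z\<in>signs1 n. complex_of_real (?c * pfrak n a z) * cis (- ((ldot n l z + l (Suc n)) * s)))
     + (\<Sum>z\<in>signs1 n. complex_of_real (qfrak n a z) * cis (- ((ldot n l z - l (Suc n)) * s)))"
    unfolding QQ_def sum_signs1_Suc[OF assms]
    by (intro arg_cong2[where f="(+)"] sum.cong) (simp_all add: qfrak_p[OF assms] qfrak_m[OF assms] ldot_Suc)
  also have "\<dots> = cis (l (Suc n) * s) * QQ n a l s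
      + complex_of_real ?c * cis (- (l (Suc n) * s)) * cnj (PP n a l s)"
    unfolding QQ_def cnj_PP sum_distrib_left
    by (subst add.commute, intro arg_cong2[where f="(+)"] sum.cong) (simp_all add: cis_mult algebra_simps)
  finally show ?thesis .
qed

lemma PQ_1: "PP 1 a l s = cis (l 1 * s)" "QQ 1 a l s = complex_of_real (cos (pi\<^sup>2 / (2 * a 1))) * cis (- (l 1 * s))"
proof -
  have ch1: "ch 1 (\<lambda>j. if j = 1 then 1 else 0) = {}" unfolding ch_def by auto
  have cht1: "cht 1 (\<lambda>j. if j = 1 then 1 else 0) = {1}" unfolding cht_def by auto
  have ld: "ldot 1 l (\<lambda>j. if j = 1 then 1 else 0) = l 1" unfolding ldot_def by simp
  show "PP 1 a l s = cis (l 1 * s)" unfolding PP_def signs1_1 pfrak_def using ch1 ld by simp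
  show "QQ 1 a l s = complex_of_real (cos (pi\<^sup>2 / (2 * a 1))) * cis (- (l 1 * s))"
    unfolding QQ_def signs1_1 qfrak_def using cht1 ld by simp
qed


lemma alg_p:
  fixes P Q :: complex and c sn S t :: real
  assumes "sn \<noteq> 0" "S \<noteq> 0"
  shows "complex_of_real (1/sn) * cis t * (P / complex_of_real S) - \<i> * complex_of_real (c/sn) * cis (-t) * cnj (- \<i> * Q / complex_of_real S)
     = (cis t * P + complex_of_real c * cis (-t) * cnj Q) / complex_of_real (S * sn)"
  using assms by (simp add: field_simps)

lemma alg_q:
  fixes P Q :: complex and c sn S t :: real
  assumes "sn \<noteq> 0" "S \<noteq> 0"
  shows "complex_of_real (1/sn) * cis t * (- \<i> * Q / complex_of_real S) - \<i> * complex_of_real (c/sn) * cis (-t) * cnj (P / complex_of_real S)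
     = - \<i> * (cis t * Q + complex_of_real c * cis (-t) * cnj P) / complex_of_real (S * sn)"
  using assms by (simp add: field_simps)

lemma alg_norm:
  fixes P Q :: complex and c t :: real
  shows "(cis t * P + complex_of_real c * cis (-t) * cnj Q) * cnj (cis t * P + complex_of_real c * cis (-t) * cnj Q)
       - (cis t * Q + complex_of_real c * cis (-t) * cnj P) * cnj (cis t * Q + complex_of_real c * cis (-t) * cnj P)
       = complex_of_real (1 - c^2) * (P * cnj P - Q * cnj Q)"
proof -
  have e: "cis t * cis (-t) = 1" by (simp add: cis_mult)
  have "cnj (cis t) = cis (-t)" "cnj (cis (-t)) = cis t" by (simp_all add: cis_cnj)
  hence "(cis t * P + complex_of_real c * cis (-t) * cnj Q) * cnj (cis t * P + complex_of_real c * cis (-t) * cnj Q)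
       - (cis t * Q + complex_of_real c * cis (-t) * cnj P) * cnj (cis t * Q + complex_of_real c * cis (-t) * cnj P)
       = (cis t * P + complex_of_real c * cis (-t) * cnj Q) * (cis (-t) * cnj P + complex_of_real c * cis t * Q)
       - (cis t * Q + complex_of_real c * cis (-t) * cnj P) * (cis (-t) * cnj Q + complex_of_real c * cis t * P)"
    by simp
  also have "\<dots> = (cis t * cis (-t)) * (P * cnj P - Q * cnj Q) + complex_of_real c ^ 2 * (cis t * cis (-t)) * (Q * cnj Q - P * cnj P)"
    by (simp add: algebra_simps power2_eq_square)
  also have "\<dots> = complex_of_real (1 - c^2) * (P * cnj P - Q * cnj Q)"
    unfolding e by (simp add: algebra_simps)
  finally show ?thesis .
qed


lemma sin_nz:
  assumes "0 < x" "x < pi" "x \<notin> excl_set"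
  shows "sin (pi\<^sup>2 / (2 * x)) \<noteq> 0"
proof
  assume "sin (pi\<^sup>2 / (2 * x)) = 0"
  then obtain i :: int where i: "pi\<^sup>2 / (2 * x) = of_int i * pi" by (auto simp: sin_zero_iff_int2)
  have pos: "pi\<^sup>2 / (2 * x) > 0" using assms pi_gt_zero by simp
  hence "i > 0" using i pi_gt_zero by (smt (verit) mult_nonpos_nonneg of_int_le_0_iff)
  then have "nat i \<ge> 1" by simp
  have "x = pi / (2 * real (nat i))"
    using i \<open>i > 0\<close> assms(1) pi_gt_zero by (simp add: field_simps power2_eq_square)
  hence "x \<in> excl_set" unfolding excl_set_def using \<open>nat i \<ge> 1\<close> by blast
  thus False using assms(3) by simp
qed

definition SS :: "nat \<Rightarrow> (nat \<Rightarrow> real) \<Rightarrow> real" where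
  "SS n a = (\<Prod>j=1..n. sin (pi\<^sup>2 / (2 * a j)))"

lemma main:
  assumes "n \<ge> 1" "\<forall>j\<in>{1..n}. sin (pi\<^sup>2 / (2 * a j)) \<noteq> 0"
  shows "Tmat a l s n = mat2 (PP n a l s / complex_of_real (SS n a)) (- \<i> * QQ n a l s / complex_of_real (SS n a))
            (cnj (- \<i> * QQ n a l s / complex_of_real (SS n a))) (cnj (PP n a l s / complex_of_real (SS n a)))
      \<and> PP n a l s * cnj (PP n a l s) - QQ n a l s * cnj (QQ n a l s) = complex_of_real ((SS n a)^2)
      \<and> SS n a \<noteq> 0"
  using assms
proof (induction n rule: dec_induct)
  case base
  have sn: "sin (pi\<^sup>2 / (2 * a 1)) \<noteq> 0" using base by simp
  have S1: "SS 1 a = sin (pi\<^sup>2 / (2 * a 1))" unfolding SS_def by simp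
  have T1: "Tmat a l s 1 = Amat (a 1) ** Bmat (l 1) s ** mat2 1 0 (cnj 0) (cnj 1)"
    by (simp add: mat1_mat2)
  have e: "cis (l 1 * s) * cis (- (l 1 * s)) = 1" by (simp add: cis_mult)
  have p1: "PP 1 a l s * cnj (PP 1 a l s) = 1" unfolding PQ_1 by (simp add: cis_cnj cis_mult)
  have q1: "QQ 1 a l s * cnj (QQ 1 a l s) = complex_of_real ((cos (pi\<^sup>2 / (2 * a 1)))^2)"
  proof -
    have "QQ 1 a l s * cnj (QQ 1 a l s) = complex_of_real ((cos (pi\<^sup>2 / (2 * a 1)))^2) * (cis (- (l 1 * s)) * cis (l 1 * s))"
      unfolding PQ_1 by (simp add: cis_cnj power2_eq_square algebra_simps)
    also have "cis (- (l 1 * s)) * cis (l 1 * s) = 1" by (simp add: cis_mult)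
    finally show ?thesis by simp
  qed
  have nm: "PP 1 a l s * cnj (PP 1 a l s) - QQ 1 a l s * cnj (QQ 1 a l s) = complex_of_real ((SS 1 a)^2)"
    unfolding p1 q1 S1 by (simp add: cos_squared_eq)
  have mt: "Tmat a l s 1 = mat2 (PP 1 a l s / complex_of_real (SS 1 a)) (- \<i> * QQ 1 a l s / complex_of_real (SS 1 a))
            (cnj (- \<i> * QQ 1 a l s / complex_of_real (SS 1 a))) (cnj (PP 1 a l s / complex_of_real (SS 1 a)))"
    unfolding T1 step_mat PQ_1 S1 mat2_eq
    using sn by (simp_all add: field_simps cot_def cis_cnj)
  show ?case using mt nm sn S1 by simp
next
  case (step m)
  have pr: "\<forall>j\<in>{1..Suc m}. sin (pi\<^sup>2 / (2 * a j)) \<noteq> 0" using step by blast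
  have "\<forall>j\<in>{1..m}. sin (pi\<^sup>2 / (2 * a j)) \<noteq> 0" using pr by auto
  hence IH: "Tmat a l s m = mat2 (PP m a l s / complex_of_real (SS m a)) (- \<i> * QQ m a l s / complex_of_real (SS m a))
            (cnj (- \<i> * QQ m a l s / complex_of_real (SS m a))) (cnj (PP m a l s / complex_of_real (SS m a)))"
      "PP m a l s * cnj (PP m a l s) - QQ m a l s * cnj (QQ m a l s) = complex_of_real ((SS m a)^2)"
      "SS m a \<noteq> 0" using step by blast+
  let ?sn = "sin (pi\<^sup>2 / (2 * a (Suc m)))"
  let ?c = "cos (pi\<^sup>2 / (2 * a (Suc m)))"
  let ?t = "l (Suc m) * s"
  have sn: "?sn \<noteq> 0" using pr by simp
  have SSs: "SS (Suc m) a = SS m a * ?sn" unfolding SS_def by (simp add: prod.cl_ivl_Suc)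
  have cotd: "cot (pi\<^sup>2 / (2 * a (Suc m))) = ?c / ?sn" by (simp add: cot_def)
  have mt: "Tmat a l s (Suc m) = mat2 (PP (Suc m) a l s / complex_of_real (SS (Suc m) a)) (- \<i> * QQ (Suc m) a l s / complex_of_real (SS (Suc m) a))
            (cnj (- \<i> * QQ (Suc m) a l s / complex_of_real (SS (Suc m) a))) (cnj (PP (Suc m) a l s / complex_of_real (SS (Suc m) a)))"
    unfolding Tmat.simps IH(1) step_mat cotd
      alg_p[OF sn IH(3), of ?t "PP m a l s" ?c "QQ m a l s"]
      alg_q[OF sn IH(3), of ?t "QQ m a l s" ?c "PP m a l s"]
      PP_Suc[OF step(1)] QQ_Suc[OF step(1)] SSs
    by (simp add: mult.assoc)
  have nm: "PP (Suc m) a l s * cnj (PP (Suc m) a l s) - QQ (Suc m) a l s * cnj (QQ (Suc m) a l s) = complex_of_real ((SS (Suc m) a)^2)"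
    unfolding PP_Suc[OF step(1)] QQ_Suc[OF step(1)] alg_norm IH(2) SSs
    by (simp add: cos_squared_eq power_mult_distrib)
  show ?case using mt nm SSs IH(3) sn by simp
qed


theorem theorem6p1:
  fixes n :: nat and a l :: "nat \<Rightarrow> real" and s :: real
  assumes "n \<ge> 1"
    and "\<forall>j\<in>{1..n}. 0 < a j \<and> a j < pi \<and> a j \<notin> excl_set"
    and "\<forall>j\<in>{1..n}. 0 < l j"
  shows "let S = (\<Prod>j=1..n. sin (pi\<^sup>2 / (2 * a j)));
             p = (\<Sum>z\<in>signs1 n. complex_of_real (pfrak n a z) * cis (ldot n l z * s)) / complex_of_real S;
             q = (- \<i>) * (\<Sum>z\<in>signs1 n. complex_of_real (qfrak n a z) * cis (- (ldot n l z * s))) / complex_of_real S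
         in Tmat a l s n = mat2 p q (cnj q) (cnj p) \<and> (cmod p)\<^sup>2 - (cmod q)\<^sup>2 = 1"
proof -
  have "\<forall>j\<in>{1..n}. sin (pi\<^sup>2 / (2 * a j)) \<noteq> 0" using assms(2) sin_nz by blast
  note M = main[OF assms(1) this, of l s]
  define S where "S = SS n a"
  define P where "P = PP n a l s"
  define Q where "Q = QQ n a l s"
  have M1: "Tmat a l s n = mat2 (P / complex_of_real S) (- \<i> * Q / complex_of_real S)
            (cnj (- \<i> * Q / complex_of_real S)) (cnj (P / complex_of_real S))"
    and M2: "P * cnj P - Q * cnj Q = complex_of_real (S^2)" and M3: "S \<noteq> 0"
    using M unfolding S_def P_def Q_def by blast+
  have "complex_of_real ((cmod (P / complex_of_real S))\<^sup>2 - (cmod (- \<i> * Q / complex_of_real S))\<^sup>2)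
      = (P * cnj P - Q * cnj Q) / complex_of_real (S^2)"
    unfolding of_real_diff complex_norm_square using M3 by (simp add: field_simps power2_eq_square)
  also have "\<dots> = 1" using M2 M3 by simp
  finally have N: "(cmod (P / complex_of_real S))\<^sup>2 - (cmod (- \<i> * Q / complex_of_real S))\<^sup>2 = 1"
    by (metis of_real_eq_1_iff)
  show ?thesis using M1 N unfolding S_def P_def Q_def SS_def PP_def QQ_def Let_def by simp
qed


end
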